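(* For every $\tau\in[0,\tfrac1{3\sqrt3}]$ the function $t\mapsto e^{2t}y_\tau(t)$ is increasing on $[0,p_\tau]$; consequently $y_\tau(t)\ge\tfrac23e^{-2t}$ on $[0,p_\tau]$, and $|\dot y_\tau|<2y_\tau$ there.
   Context: $y_\tau$ solves $\ddot y=-2y(3y-2)$, $y(0)=y_{\max}$, $\dot y(0)=0$, with $y_{\max}$ the largest root of $y^3-y^2+4\tau^2$ (so $y_{\max}\ge\tfrac23$); $p_\tau$ is its half-period (the first positive time where $y_\tau$ attains its minimum; for $\tau=0$, $y_0=\operatorname{sech}^2t$ and $p_0=\infty$). *)

theory Defs
  imports "HOL-Analysis.Analysis"
begin

definition ymax :: "real \<Rightarrow> real" where
  "ymax \<tau> = Max {Y::real. Y ^ 3 - Y ^ 2 + 4 * \<tau> ^ 2 = 0}"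

definition is_y_tau :: "real \<Rightarrow> (real \<Rightarrow> real) \<Rightarrow> bool" where
  "is_y_tau \<tau> y \<longleftrightarrow>
     (\<forall>t. (y has_real_derivative deriv y t) (at t)) \<and>
     (\<forall>t. (deriv y has_real_derivative (- 2 * y t * (3 * y t - 2))) (at t)) \<and>
     y 0 = ymax \<tau> \<and> deriv y 0 = 0"

definition half_period :: "(real \<Rightarrow> real) \<Rightarrow> ereal" where
  "half_period y =
     (let S = {t::real. 0 < t \<and> y t = (INF s. y s)}
      in if S = {} then \<infinity> else ereal (Inf S))"

end

theory Submission
  imports Defs "HOL-Computational_Algebra.Polynomial"
begin

lemma ymax_props:
  fixes \<tau> :: real
  assumes "0 \<le> \<tau>" and "\<tau> \<le> 1 / (3 * sqrt 3)"
  shows "ymax \<tau> ^ 3 - ymax \<tau> ^ 2 + 4 * \<tau> ^ 2 = 0 \<and> ymax \<tau> \<ge> 2/3"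
proof -
  let ?R = "{Y::real. Y ^ 3 - Y ^ 2 + 4 * \<tau> ^ 2 = 0}"
  have eq: "?R = {Y. poly [:4*\<tau>^2, 0, -1, 1:] Y = 0}"
    by (auto simp: algebra_simps power2_eq_square power3_eq_cube)
  have fin: "finite ?R" unfolding eq by (rule poly_roots_finite) simp
  have t1: "\<tau> * (3 * sqrt 3) \<le> 1" using assms
    by (simp add: field_simps)
  have "(\<tau> * (3 * sqrt 3))^2 \<le> 1^2"
    using t1 assms(1) by (intro power_mono) auto
  hence t2: "27 * \<tau>^2 \<le> 1" by (simp add: power_mult_distrib)
  have "\<exists>x\<ge>2/3. x \<le> 1 \<and> (\<lambda>Y::real. Y ^ 3 - Y ^ 2 + 4 * \<tau> ^ 2) x = 0"
    using t2 by (intro IVT') (auto intro!: continuous_intros simp: power2_eq_square power3_eq_cube)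
  then obtain r where r: "r \<ge> 2/3" "r \<in> ?R" by auto
  hence ne: "?R \<noteq> {}" by auto
  have "ymax \<tau> \<in> ?R" unfolding ymax_def using Max_in[OF fin ne] .
  moreover have "r \<le> ymax \<tau>" unfolding ymax_def using Max_ge[OF fin r(2)] .
  ultimately show ?thesis using r by auto
qed

theorem mainTheorem9:
  fixes \<tau> :: real and y :: "real \<Rightarrow> real"
  assumes "0 \<le> \<tau>" and "\<tau> \<le> 1 / (3 * sqrt 3)"
    and "is_y_tau \<tau> y"
  shows "strict_mono_on {t. 0 \<le> t \<and> ereal t \<le> half_period y} (\<lambda>t. exp (2 * t) * y t)
         \<and> (\<forall>t. 0 \<le> t \<and> ereal t \<le> half_period y \<longrightarrow>
               y t \<ge> 2 / 3 * exp (- 2 * t) \<and> \<bar>deriv y t\<bar> < 2 * y t)"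
proof -
  define d where "d = deriv y"
  define m where "m = ymax \<tau>"
  have dy: "\<And>t. (y has_real_derivative d t) (at t)"
    and dd: "\<And>t. (d has_real_derivative (- 2 * y t * (3 * y t - 2))) (at t)"
    and y0: "y 0 = m" and d0: "d 0 = 0"
    using assms(3) unfolding is_y_tau_def d_def m_def by auto
  have mp: "m ^ 3 - m ^ 2 + 4 * \<tau> ^ 2 = 0" "m \<ge> 2/3"
    using ymax_props[OF assms(1,2)] unfolding m_def by auto
  have cy: "\<And>t. isCont y t" using dy DERIV_isCont by blast
  define E where "E t = d t ^ 2 - 4 * y t ^ 2 + 4 * y t ^ 3" for t
  have dE: "(E has_real_derivative 0) (at t)" for t
    unfolding E_def
    by (rule derivative_eq_intros dy dd refl)+
       (simp add: algebra_simps power2_eq_square power3_eq_cube)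
  have energy: "d t ^ 2 = 4 * y t ^ 2 - 4 * y t ^ 3 - 16 * \<tau>^2" for t
  proof -
    have "E t = E 0" using DERIV_isconst_all[of E] dE by blast
    thus ?thesis unfolding E_def using y0 d0 mp(1) by (simp add: algebra_simps)
  qed
  define g where "g t = exp (2 * t) * y t" for t
  define g' where "g' t = exp (2 * t) * (2 * y t + d t)" for t
  have dg: "(g has_real_derivative g' t) (at t)" for t
    unfolding g_def g'_def
    by (rule derivative_eq_intros dy refl)+ (simp add: algebra_simps)
  have g'_nonneg: "g' t \<ge> 0" if "y t \<ge> 0" for t
  proof -
    have "0 \<le> y t ^ 3" using that by simp
    moreover have "0 \<le> \<tau>^2" by simp
    moreover have "(abs (d t))^2 = d t ^ 2" "(2 * y t)^2 = 4 * y t ^ 2"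
      by (simp_all add: power_mult_distrib)
    ultimately have "(abs (d t))^2 \<le> (2 * y t)^2" using energy[of t]
      by linarith
    moreover have "0 \<le> 2 * y t" using that by simp
    ultimately have "abs (d t) \<le> 2 * y t" by (rule power2_le_imp_le)
    thus ?thesis unfolding g'_def by auto
  qed
  have ypos: "y t > 0" if "t \<ge> 0" for t
  proof (rule ccontr)
    assume "\<not> y t > 0"
    define S where "S = {s. 0 \<le> s} \<inter> {s. y s \<le> 0}"
    have cS: "closed S" unfolding S_def
    proof (rule closed_Int)
      have cu: "continuous_on UNIV y" using cy by (simp add: continuous_on_eq_continuous_at)
      show "closed {s::real. y s \<le> 0}"
        by (rule closed_Collect_le[OF cu continuous_on_const])
      show "closed {s::real. 0 \<le> s}"
        by (rule closed_Collect_le[OF continuous_on_const continuous_on_id])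
    qed
    have neS: "S \<noteq> {}" using that \<open>\<not> y t > 0\<close> unfolding S_def by auto
    have bS: "bdd_below S" unfolding S_def by (auto intro: bdd_belowI[of _ 0])
    define t0 where "t0 = Inf S"
    have t0S: "t0 \<in> S" unfolding t0_def by (rule closed_contains_Inf[OF neS bS cS])
    have below: "y s > 0" if "0 \<le> s" "s < t0" for s
    proof (rule ccontr)
      assume "\<not> y s > 0"
      hence "s \<in> S" using that unfolding S_def by auto
      hence "t0 \<le> s" unfolding t0_def using bS by (rule cInf_lower)
      thus False using that by auto
    qed
    have t0a: "0 \<le> t0" "y t0 \<le> 0" using t0S unfolding S_def by auto
    have "t0 \<noteq> 0" using t0a(2) y0 mp(2) by (cases "t0 = 0") auto
    hence "0 < t0" using t0a(1) by linarith
    then obtain z where z: "0 < z" "z < t0" "g t0 - g 0 = (t0 - 0) * g' z"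
      using MVT2[of 0 t0 g g'] dg by blast
    have "y z > 0" using below[of z] z by linarith
    hence "g' z \<ge> 0" using g'_nonneg[of z] by linarith
    hence "(t0 - 0) * g' z \<ge> 0" using \<open>0 < t0\<close> by simp
    hence "g t0 \<ge> g 0" using z(3) by linarith
    moreover have "g 0 > 0" unfolding g_def using y0 mp(2) by simp
    moreover have "g t0 \<le> 0" unfolding g_def
      using mult_nonneg_nonpos[of "exp (2*t0)" "y t0"] t0a(2) by simp
    ultimately show False by simp
  qed
  have dlt: "\<bar>d t\<bar> < 2 * y t" if "t \<ge> 0" for t
  proof -
    have yp: "y t > 0" using ypos that .
    have "0 < y t ^ 3" using yp by simp
    moreover have "0 \<le> \<tau>^2" by simp
    moreover have "(abs (d t))^2 = d t ^ 2" "(2 * y t)^2 = 4 * y t ^ 2"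
      by (simp_all add: power_mult_distrib)
    ultimately have "(abs (d t))^2 < (2 * y t)^2" using energy[of t]
      by linarith
    moreover have "0 \<le> 2 * y t" using yp by simp
    ultimately show ?thesis by (rule power_less_imp_less_base)
  qed
  have g'pos: "g' t > 0" if "t \<ge> 0" for t
    using dlt[OF that] unfolding g'_def by auto
  have smono: "g a < g b" if ab: "0 \<le> a" "a < b" for a b
  proof -
    obtain z where z: "a < z" "z < b" "g b - g a = (b - a) * g' z"
      using MVT2[of a b g g'] dg ab by blast
    have "g' z > 0" using z ab by (intro g'pos) auto
    hence "(b - a) * g' z > 0" using ab by simp
    thus ?thesis using z(3) by linarith
  qed
  have A: "strict_mono_on {t. 0 \<le> t \<and> ereal t \<le> half_period y} g"
    by (rule strict_mono_onI, rule smono) auto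
  have B: "y t \<ge> 2 / 3 * exp (- 2 * t)" if "t \<ge> 0" for t
  proof -
    have "g t \<ge> g 0" using smono[of 0 t] that by (cases "t = 0") auto
    hence "exp (2 * t) * y t \<ge> 2/3" using y0 mp(2) unfolding g_def by simp
    hence "exp (-2 * t) * (exp (2 * t) * y t) \<ge> exp (-2 * t) * (2/3)"
      by (rule mult_left_mono) auto
    moreover have "exp (-2 * t) * (exp (2 * t) * y t) = y t"
    proof -
      have e1: "exp (-2 * t) * exp (2 * t) = 1" by (simp add: exp_add[symmetric])
      have "exp (-2 * t) * (exp (2 * t) * y t) = (exp (-2 * t) * exp (2 * t)) * y t"
        by (simp only: mult.assoc)
      also have "\<dots> = y t" using e1 by simp
      finally show ?thesis .
    qed
    ultimately show ?thesis by linarith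
  qed
  have gdef: "g = (\<lambda>t. exp (2 * t) * y t)" by (rule ext) (simp add: g_def)
  show ?thesis
  proof (intro conjI allI impI)
    show "strict_mono_on {t. 0 \<le> t \<and> ereal t \<le> half_period y} (\<lambda>t. exp (2 * t) * y t)"
      using A unfolding gdef .
  next
    fix t assume "0 \<le> t \<and> ereal t \<le> half_period y"
    hence t: "0 \<le> t" by simp
    show "y t \<ge> 2 / 3 * exp (- 2 * t)" using B[OF t] .
    show "\<bar>deriv y t\<bar> < 2 * y t" using dlt[OF t] unfolding d_def .
  qed
qed

end
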